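(* Let $C>0$. For every integer $i\ge1$ there exists a constant $q_i'$ with $|q_i'|\ge\frac{(i-1)!!}{200i^2C^i}$ such that for every $x_1$ with $|x_1|\le C$, writing $x=(x_1,\sqrt{C^2-x_1^2})$: for even $i$, $$x_1^i=\frac1{q_i'}\mathbb{E}_{w_0\sim\mathcal N(0,I_2),\,b_0\sim\mathcal N(0,1)}\Big[h_i(\alpha_1)\mathbf 1\{0\le-b_0\le1/(2i)\}\mathbf 1\Big\{\tfrac{\langle w_0,x\rangle}{C}+b_0\ge0\Big\}\Big];$$ for odd $i$, $$x_1^i=\frac1{q_i'}\mathbb{E}_{w_0\sim\mathcal N(0,I_2),\,b_0\sim\mathcal N(0,1)}\Big[h_i(\alpha_1)\mathbf 1\{|b_0|\le1/(2i)\}\mathbf 1\Big\{\tfrac{\langle w_0,x\rangle}{C}+b_0\ge0\Big\}\Big].$$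
   Context: $w_0=(\alpha_1,\beta_1)\in\mathbb{R}^2$ with $\alpha_1,\beta_1$ independent standard normals, and $b_0\sim\mathcal N(0,1)$ independent of $w_0$. $h_i$ is the degree-$i$ probabilists' Hermite polynomial, $h_i(x)=i!\sum_{k=0}^{\lfloor i/2\rfloor}\frac{(-1)^k}{k!(i-2k)!}\frac{x^{i-2k}}{2^k}$; $0!!=1$. *)

theory Defs
  imports "HOL-Probability.Probability"
begin

definition hermite :: "nat \<Rightarrow> real \<Rightarrow> real" where
  "hermite i x = fact i * (\<Sum>k\<le>i div 2.
      (-1) ^ k / (fact k * fact (i - 2 * k)) * x ^ (i - 2 * k) / 2 ^ k)"

fun dfact :: "nat \<Rightarrow> nat" where
  "dfact 0 = 1"
| "dfact (Suc 0) = 1"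
| "dfact (Suc (Suc n)) = Suc (Suc n) * dfact n"

definition std_normal :: "real measure" where
  "std_normal = density lborel std_normal_density"

text \<open>Expectation over w0 = (alpha1, beta1) ~ N(0, I_2) and b0 ~ N(0,1), all independent.\<close>
definition gauss_exp3 :: "(real \<Rightarrow> real \<Rightarrow> real \<Rightarrow> real) \<Rightarrow> real" where
  "gauss_exp3 f = (\<integral>((a, b), c). f a b c \<partial>((std_normal \<Otimes>\<^sub>M std_normal) \<Otimes>\<^sub>M std_normal))"

end

theory Submission
  imports Defs "HOL-Computational_Algebra.Polynomial"
begin

definition ht :: "nat \<Rightarrow> nat \<Rightarrow> real \<Rightarrow> real" where
  "ht n k x = (if 2 * k \<le> n then (-1) ^ k * fact n / (fact k * fact (n - 2 * k) * 2 ^ k) * x ^ (n - 2 * k) else 0)"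

lemma hermite_ht: "hermite n x = (\<Sum>k\<le>n. ht n k x)"
proof -
  have "hermite n x = (\<Sum>k\<le>n div 2. ht n k x)"
    unfolding hermite_def ht_def sum_distrib_left
    by (intro sum.cong refl) auto
  also have "\<dots> = (\<Sum>k\<le>n. ht n k x)"
    by (intro sum.mono_neutral_left) (auto simp: ht_def)
  finally show ?thesis .
qed

lemma ht_0: "ht (Suc (Suc n)) 0 x = x * ht (Suc n) 0 x"
  by (simp add: ht_def)

lemma key_gen: "\<And>A B D s P X R a b c x :: real. B > 0 \<Longrightarrow> D > 0 \<Longrightarrow> P > 0 \<Longrightarrow> a > 0 \<Longrightarrow> b > 0 \<Longrightarrow> c > 0 \<Longrightarrow> R + 1 = b + 2 * c \<Longrightarrow>
      (- s) * ((R + 1) * (R * A)) / (c * D * (b * (a * B)) * (2 * P)) * (x * (x * X))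
      = x * ((- s) * (R * A) / (c * D * (a * B) * (2 * P)) * (x * X))
        - R * (s * A / (D * (b * (a * B)) * P) * (x * (x * X)))"
proof -
  fix A B D s P X R a b c x :: real
  assume h: "B > 0" "D > 0" "P > 0" "a > 0" "b > 0" "c > 0" "R + 1 = b + 2 * c"
  have "(- s) * ((R + 1) * (R * A)) / (c * D * (b * (a * B)) * (2 * P)) * (x * (x * X))
     = - (s * R * A * x * x * X / (D * a * B * P)) * ((R + 1) / (2 * b * c))" using h by (simp add: field_simps)
  also have "(R + 1) / (2 * b * c) = 1 / (2 * c) + 1 / b" using h by (simp add: field_simps)
  finally show "(- s) * ((R + 1) * (R * A)) / (c * D * (b * (a * B)) * (2 * P)) * (x * (x * X))
      = x * ((- s) * (R * A) / (c * D * (a * B) * (2 * P)) * (x * X))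
        - R * (s * A / (D * (b * (a * B)) * P) * (x * (x * X)))" using h by (simp add: field_simps)
qed

lemma key_alg:
  fixes A B D s P X x :: real and n m k :: nat
  assumes "n = m + 2 * k + 2" "B > 0" "D > 0" "P > 0"
  shows "(-s) * (real (Suc (Suc n)) * (real (Suc n) * A)) / ((real (Suc k) * D) * (real (Suc (Suc m)) * (real (Suc m) * B)) * (2 * P)) * (x * (x * X))
    = x * ((-s) * (real (Suc n) * A) / ((real (Suc k) * D) * (real (Suc m) * B) * (2 * P)) * (x * X))
      - real (Suc n) * (s * A / (D * (real (Suc (Suc m)) * (real (Suc m) * B)) * P) * (x * (x * X)))"
proof -
  have "real (Suc (Suc n)) = real (Suc n) + 1" by simp
  then show ?thesis
    using key_gen[where B=B and D=D and P=P and a="real (Suc m)" and b="real (Suc (Suc m))" and c="real (Suc k)" and R="real (Suc n)" and s=s and A=A and X=X and x=x] assms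
    by (simp add: mult.assoc)
qed

lemma ht_step: "ht (Suc (Suc n)) (Suc k) x = x * ht (Suc n) (Suc k) x - real (Suc n) * ht n k x"
proof -
  consider "2 * k + 2 \<le> n" | "n = 2 * k + 1" | "n = 2 * k" | "n < 2 * k" by linarith
  then show ?thesis
  proof cases
    case 1
    then obtain m where n: "n = m + 2 * k + 2" by (metis add.commute le_Suc_ex add.assoc)
    have e1: "Suc (Suc n) - 2 * Suc k = Suc (Suc m)" and e2: "Suc n - 2 * Suc k = Suc m"
      and e3: "n - 2 * k = Suc (Suc m)" using n by auto
    have B: "(fact m :: real) > 0" "(fact k :: real) > 0" "(2::real) ^ k > 0" by auto
    show ?thesis using 1
      unfolding ht_def e1 e2 e3
      using key_alg[OF n B, of "(-1)^k" "fact n" x "x^m"] by (simp add: fact_Suc)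
  next
    case 2
    have F: "(fact (Suc (Suc (2 * k + 1))) :: real) = real (2 * k + 3) * (real (2 * k + 2) * fact (2 * k + 1))"
      "(fact (Suc (2 * k + 1)) :: real) = real (2 * k + 2) * fact (2 * k + 1)"
      "(fact (Suc k) :: real) = real (k + 1) * fact k"
      by (simp_all add: fact_Suc)
    have h1: "ht (Suc (Suc n)) (Suc k) x = - ((-1)^k * (real (2 * k + 3) * (real (2 * k + 2) * fact (2 * k + 1))) / (real (k + 1) * fact k * (2 * 2 ^ k)) * x)"
      unfolding ht_def 2 F(1) F(3) by simp
    have h2: "ht (Suc n) (Suc k) x = - ((-1)^k * (real (2 * k + 2) * fact (2 * k + 1)) / (real (k + 1) * fact k * (2 * 2 ^ k)))"
      unfolding ht_def 2 F(2) F(3) by simp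
    have h3: "ht n k x = (-1)^k * fact (2 * k + 1) / (fact k * 2 ^ k) * x"
      unfolding ht_def 2 by simp
    have pos: "(fact k :: real) > 0" "(2::real) ^ k > 0" by auto
    have eq: "real (2 * k + 3) = 2 * real k + 3" "real (2 * k + 2) = 2 * real k + 2"
      "real (Suc n) = 2 * real k + 2" "real (k + 1) = real k + 1" using 2 by simp_all
    have gen: "\<And>s F D P K :: real. D > 0 \<Longrightarrow> P > 0 \<Longrightarrow> K \<ge> 0 \<Longrightarrow>
      - (s * ((2 * K + 3) * ((2 * K + 2) * F)) / ((K + 1) * D * (2 * P)) * x)
      = x * - (s * ((2 * K + 2) * F) / ((K + 1) * D * (2 * P))) - (2 * K + 2) * (s * F / (D * P) * x)"
    proof -
      fix s F D P K :: real assume h: "D > 0" "P > 0" "K \<ge> 0"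
      define c where "c = K + 1"
      have c: "c > 0" "K = c - 1" using h(3) by (simp_all add: c_def)
      show "- (s * ((2 * K + 3) * ((2 * K + 2) * F)) / ((K + 1) * D * (2 * P)) * x)
      = x * - (s * ((2 * K + 2) * F) / ((K + 1) * D * (2 * P))) - (2 * K + 2) * (s * F / (D * P) * x)"
        unfolding c(2) using h(1,2) c(1) by (simp add: field_simps)
    qed
    show ?thesis
      unfolding h1 h2 h3 eq by (rule gen) (use pos in auto)
  next
    case 3
    have F: "(fact (Suc (Suc (2 * k))) :: real) = real (2 * k + 2) * (real (2 * k + 1) * fact (2 * k))"
      "(fact (Suc k) :: real) = real (k + 1) * fact k"
      by (simp_all add: fact_Suc)
    have h1: "ht (Suc (Suc n)) (Suc k) x = - ((-1)^k * (real (2 * k + 2) * (real (2 * k + 1) * fact (2 * k))) / (real (k + 1) * fact k * (2 * 2 ^ k)))"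
      unfolding ht_def 3 F by simp
    have h2: "ht (Suc n) (Suc k) x = 0"
      unfolding ht_def 3 by simp
    have h3: "ht n k x = (-1)^k * fact (2 * k) / (fact k * 2 ^ k)"
      unfolding ht_def 3 by simp
    have pos: "(fact k :: real) > 0" "(2::real) ^ k > 0" by auto
    have eq: "real (2 * k + 1) = 2 * real k + 1" "real (2 * k + 2) = 2 * real k + 2"
      "real (Suc n) = 2 * real k + 1" "real (k + 1) = real k + 1" using 3 by simp_all
    have gen: "\<And>s F D P K :: real. D > 0 \<Longrightarrow> P > 0 \<Longrightarrow> K \<ge> 0 \<Longrightarrow>
      - (s * ((2 * K + 2) * ((2 * K + 1) * F)) / ((K + 1) * D * (2 * P)))
      = x * 0 - (2 * K + 1) * (s * F / (D * P))"
    proof -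
      fix s F D P K :: real assume h: "D > 0" "P > 0" "K \<ge> 0"
      define c where "c = K + 1"
      have c: "c > 0" "K = c - 1" using h(3) by (simp_all add: c_def)
      show "- (s * ((2 * K + 2) * ((2 * K + 1) * F)) / ((K + 1) * D * (2 * P)))
      = x * 0 - (2 * K + 1) * (s * F / (D * P))"
        unfolding c(2) using h(1,2) c(1) by (simp add: field_simps)
    qed
    show ?thesis
      unfolding h1 h2 h3 eq by (rule gen) (use pos in auto)
  next
    case 4
    then show ?thesis unfolding ht_def by auto
  qed
qed

lemma hermite_rec: "hermite (Suc (Suc n)) x = x * hermite (Suc n) x - real (Suc n) * hermite n x"
proof -
  have z1: "ht (Suc n) (Suc (Suc n)) x = 0" "ht n (Suc n) x = 0" by (auto simp: ht_def)
  have "hermite (Suc (Suc n)) x = ht (Suc (Suc n)) 0 x + (\<Sum>k\<le>Suc n. ht (Suc (Suc n)) (Suc k) x)"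
    unfolding hermite_ht by (rule sum.atMost_Suc_shift)
  also have "\<dots> = x * (ht (Suc n) 0 x + (\<Sum>k\<le>Suc n. ht (Suc n) (Suc k) x)) - real (Suc n) * (\<Sum>k\<le>Suc n. ht n k x)"
    by (simp add: ht_0 ht_step sum_subtractf sum_distrib_left algebra_simps)
  also have "(\<Sum>k\<le>Suc n. ht (Suc n) (Suc k) x) = (\<Sum>k\<le>n. ht (Suc n) (Suc k) x)"
    using z1 by simp
  also have "ht (Suc n) 0 x + (\<Sum>k\<le>n. ht (Suc n) (Suc k) x) = hermite (Suc n) x"
    unfolding hermite_ht by (rule sum.atMost_Suc_shift[symmetric])
  also have "(\<Sum>k\<le>Suc n. ht n k x) = hermite n x"
    unfolding hermite_ht using z1 by simp
  finally show ?thesis .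
qed

lemma hermite_0[simp]: "hermite 0 x = 1"
  by (simp add: hermite_def)

lemma hermite_1[simp]: "hermite (Suc 0) x = x"
  by (simp add: hermite_def)

lemma hermite_deriv: "(hermite (Suc n) has_real_derivative (real (Suc n) * hermite n x)) (at x)"
proof -
  have "\<forall>x. (hermite (Suc n) has_real_derivative (real (Suc n) * hermite n x)) (at x)
     \<and> (hermite (Suc (Suc n)) has_real_derivative (real (Suc (Suc n)) * hermite (Suc n) x)) (at x)"
  proof (induction n)
    case 0
    have e: "hermite (Suc (Suc 0)) = (\<lambda>x. x * x - 1)"
      by (rule ext) (simp add: hermite_rec)
    show ?case unfolding e
      by (auto intro!: derivative_eq_intros)
  next
    case (Suc n)
    have e: "hermite (Suc (Suc (Suc n))) = (\<lambda>x. x * hermite (Suc (Suc n)) x - real (Suc (Suc n)) * hermite (Suc n) x)"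
      by (rule ext) (rule hermite_rec)
    show ?case
    proof (intro allI conjI)
      fix x
      show "(hermite (Suc (Suc n)) has_real_derivative real (Suc (Suc n)) * hermite (Suc n) x) (at x)"
        using Suc by blast
      have d1: "(hermite (Suc (Suc n)) has_real_derivative real (Suc (Suc n)) * hermite (Suc n) x) (at x)"
        using Suc by blast
      have d2: "(hermite (Suc n) has_real_derivative real (Suc n) * hermite n x) (at x)"
        using Suc by blast
      have "((\<lambda>x. x * hermite (Suc (Suc n)) x - real (Suc (Suc n)) * hermite (Suc n) x) has_real_derivative
          (1 * hermite (Suc (Suc n)) x + (real (Suc (Suc n)) * hermite (Suc n) x) * x - real (Suc (Suc n)) * (real (Suc n) * hermite n x))) (at x)"
        by (intro DERIV_diff DERIV_mult DERIV_cmult DERIV_ident d1 d2)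
      moreover have "1 * hermite (Suc (Suc n)) x + (real (Suc (Suc n)) * hermite (Suc n) x) * x - real (Suc (Suc n)) * (real (Suc n) * hermite n x)
          = real (Suc (Suc (Suc n))) * hermite (Suc (Suc n)) x"
        by (simp only: hermite_rec[of n x]) (simp add: algebra_simps)
      ultimately show "(hermite (Suc (Suc (Suc n))) has_real_derivative real (Suc (Suc (Suc n))) * hermite (Suc (Suc n)) x) (at x)"
        unfolding e by simp
    qed
  qed
  then show ?thesis by blast
qed

lemma hermite_neg: "hermite n (- x) = (-1) ^ n * hermite n x"
proof -
  have "hermite n (- x) = (-1) ^ n * hermite n x \<and> hermite (Suc n) (- x) = (-1) ^ Suc n * hermite (Suc n) x"
  proof (induction n)
    case 0 then show ?case by simp
  next
    case (Suc n)
    then show ?case by (simp add: hermite_rec algebra_simps)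
  qed
  then show ?thesis by blast
qed

definition Hp :: "nat \<Rightarrow> real poly" where
  "Hp n = (\<Sum>k\<le>n. if 2 * k \<le> n then monom ((-1) ^ k * fact n / (fact k * fact (n - 2 * k) * 2 ^ k)) (n - 2 * k) else 0)"

lemma poly_Hp: "poly (Hp n) x = hermite n x"
  unfolding Hp_def hermite_ht poly_sum
  by (intro sum.cong refl) (auto simp: ht_def poly_monom)

lemma hermite_continuous[continuous_intros]: "continuous_on S (hermite n)"
proof -
  have "continuous_on S (\<lambda>x. poly (Hp n) x)" by (intro continuous_intros)
  then show ?thesis unfolding poly_Hp by (simp add: fun_eq_iff)
qed

lemma hermite_isCont: "isCont (hermite n) x"
  using hermite_continuous[of UNIV n] continuous_on_eq_continuous_at by blast

lemma hermite_measurable[measurable]: "hermite n \<in> borel_measurable borel"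
  using hermite_continuous[of UNIV n] by (rule borel_measurable_continuous_onI)


abbreviation "phi \<equiv> std_normal_density"

definition M :: "nat \<Rightarrow> real" where "M k = (\<integral>z. phi z * z ^ k \<partial>lborel)"

lemma int_poly[intro]: "integrable lborel (\<lambda>z. phi z * poly p z)"
proof -
  have "(\<lambda>z. phi z * poly p z) = (\<lambda>z. \<Sum>k\<le>degree p. coeff p k * (phi z * z ^ k))"
    by (simp add: poly_altdef sum_distrib_left mult_ac)
  moreover have "integrable lborel (\<lambda>z. \<Sum>k\<le>degree p. coeff p k * (phi z * z ^ k))"
    by (intro Bochner_Integration.integrable_sum integrable_mult_right integrable_std_normal_moment)
  ultimately show ?thesis by simp
qed

lemma poly_sum_N:
  fixes p :: "real poly"
  assumes "degree p \<le> N" shows "poly p z = (\<Sum>k\<le>N. coeff p k * z ^ k)"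
  unfolding poly_altdef
  by (rule sum.mono_neutral_left) (use assms in \<open>auto simp: coeff_eq_0\<close>)

lemma int_sum: "finite A \<Longrightarrow> (\<integral>z. phi z * (\<Sum>k\<in>A. a k * z ^ g k) \<partial>lborel) = (\<Sum>k\<in>A. a k * M (g k))"
proof -
  assume A: "finite A"
  have "(\<integral>z. phi z * (\<Sum>k\<in>A. a k * z ^ g k) \<partial>lborel) = (\<integral>z. (\<Sum>k\<in>A. a k * (phi z * z ^ g k)) \<partial>lborel)"
    by (simp add: sum_distrib_left mult_ac)
  also have "\<dots> = (\<Sum>k\<in>A. a k * M (g k))"
    by (subst Bochner_Integration.integral_sum) (auto simp: M_def intro!: integrable_mult_right integrable_std_normal_moment)
  finally show ?thesis .
qed

lemma M_rec: "M (Suc (Suc k)) = real (Suc k) * M k"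
proof (cases "even k")
  case True
  then obtain m where k: "k = 2 * m" by blast
  have "M (Suc (Suc k)) = fact (2 * Suc m) / (2 ^ Suc m * fact (Suc m))"
    unfolding M_def k using integral_std_normal_moment_even[of "Suc m"] by simp
  moreover have "M k = fact (2 * m) / (2 ^ m * fact m)"
    unfolding M_def k using integral_std_normal_moment_even[of m] by simp
  ultimately have a1: "M (Suc (Suc k)) * (2 ^ Suc m * fact (Suc m)) = fact (2 * Suc m)"
    and a2: "M k * (2 ^ m * fact m) = fact (2 * m)" by simp_all
  have f1: "(fact (2 * Suc m) :: real) = (2 * real (Suc m)) * (real (Suc (2 * m)) * fact (2 * m))"
    by (simp add: fact_Suc)
  have f2: "(2 ^ Suc m * fact (Suc m) :: real) = (2 * real (Suc m)) * (2 ^ m * fact m)"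
    by (simp add: fact_Suc)
  have gen: "\<And>X Y c d Q :: real. c > 0 \<Longrightarrow> Q > 0 \<Longrightarrow> X * (c * Q) = c * (d * (Y * Q)) \<Longrightarrow> X = d * Y"
  proof -
    fix X Y c d Q :: real assume h: "c > 0" "Q > 0" "X * (c * Q) = c * (d * (Y * Q))"
    then have "X * (c * Q) = (d * Y) * (c * Q)" by (simp add: mult_ac)
    then show "X = d * Y" using h by simp
  qed
  have b1: "M (Suc (Suc k)) * ((2 * real (Suc m)) * (2 ^ m * fact m)) = (2 * real (Suc m)) * (real (Suc (2 * m)) * fact (2 * m))"
    using a1 unfolding f1 f2 .
  have b2: "M (Suc (Suc k)) * ((2 * real (Suc m)) * (2 ^ m * fact m)) = (2 * real (Suc m)) * (real (Suc (2 * m)) * (M k * (2 ^ m * fact m)))"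
    using b1 unfolding a2[symmetric] .
  have "M (Suc (Suc k)) = real (Suc (2 * m)) * M k"
    by (rule gen[OF _ _ b2]) auto
  then show ?thesis using k by simp
next
  case False
  then obtain m where k: "k = 2 * m + 1" using oddE by blast
  have "M (Suc (Suc k)) = 0"
    unfolding M_def k using integral_std_normal_moment_odd[of "Suc m"] by simp
  moreover have "M k = 0"
    unfolding M_def k using integral_std_normal_moment_odd[of m] by simp
  ultimately show ?thesis by simp
qed

lemma M_1: "M (Suc 0) = 0"
  unfolding M_def using integral_std_normal_moment_odd[of 0] by simp

lemma stein_poly: "(\<integral>z. phi z * (z * poly p z) \<partial>lborel) = (\<integral>z. phi z * poly (pderiv p) z \<partial>lborel)"
proof -
  define d where "d = degree p"
  have e: "\<And>z. poly p z = (\<Sum>k\<le>Suc d. coeff p k * z ^ k)"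
    by (rule poly_sum_N) (simp add: d_def)
  have "(\<integral>z. phi z * (z * poly p z) \<partial>lborel) = (\<integral>z. phi z * (\<Sum>k\<le>Suc d. coeff p k * z ^ Suc k) \<partial>lborel)"
    unfolding e sum_distrib_left by (simp only: power_Suc mult_ac)
  also have "\<dots> = (\<Sum>k\<le>Suc d. coeff p k * M (Suc k))"
    by (rule int_sum) simp
  also have "\<dots> = coeff p 0 * M 1 + (\<Sum>k\<le>d. coeff p (Suc k) * M (Suc (Suc k)))"
    by (subst sum.atMost_Suc_shift) simp
  also have "\<dots> = (\<Sum>k\<le>d. coeff (pderiv p) k * M k)"
    by (simp add: M_1 M_rec coeff_pderiv mult_ac)
  also have "\<dots> = (\<integral>z. phi z * (\<Sum>k\<le>d. coeff (pderiv p) k * z ^ k) \<partial>lborel)"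
    by (rule int_sum[symmetric]) simp
  also have "\<dots> = (\<integral>z. phi z * poly (pderiv p) z \<partial>lborel)"
    by (subst poly_sum_N[of "pderiv p" d]) (auto simp: d_def degree_pderiv)
  finally show ?thesis .
qed

lemma hermite_poly_comp: "hermite n (a + b * z) = poly (pcompose (Hp n) [:a, b:]) z"
  by (simp add: poly_pcompose poly_Hp mult.commute)

lemma poly_pderiv_Hp: "poly (pderiv (Hp (Suc n))) y = real (Suc n) * hermite n y"
proof -
  have "DERIV (\<lambda>x. poly (Hp (Suc n)) x) y :> poly (pderiv (Hp (Suc n))) y" by simp
  moreover have "DERIV (\<lambda>x. poly (Hp (Suc n)) x) y :> real (Suc n) * hermite n y"
    unfolding poly_Hp using hermite_deriv by (simp add: fun_eq_iff)
  ultimately show ?thesis by (rule DERIV_unique)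
qed

lemma int_herm[intro]: "integrable lborel (\<lambda>z. phi z * hermite n (a + b * z))"
  unfolding hermite_poly_comp by (rule int_poly)

lemma int_herm_z[intro]: "integrable lborel (\<lambda>z. phi z * (z * hermite n (a + b * z)))"
proof -
  have "(\<lambda>z. phi z * (z * hermite n (a + b * z))) = (\<lambda>z. phi z * poly ([:0, 1:] * pcompose (Hp n) [:a, b:]) z)"
    unfolding hermite_poly_comp by (simp add: fun_eq_iff)
  then show ?thesis by (subst \<open>_ = _\<close>) (rule int_poly)
qed

lemma stein_herm: "(\<integral>z. phi z * (z * hermite (Suc n) (a + b * z)) \<partial>lborel)
   = b * real (Suc n) * (\<integral>z. phi z * hermite n (a + b * z) \<partial>lborel)"
proof -
  have "(\<integral>z. phi z * (z * hermite (Suc n) (a + b * z)) \<partial>lborel)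
      = (\<integral>z. phi z * poly (pderiv (pcompose (Hp (Suc n)) [:a, b:])) z \<partial>lborel)"
    unfolding hermite_poly_comp by (rule stein_poly)
  also have "\<dots> = (\<integral>z. b * real (Suc n) * (phi z * hermite n (a + b * z)) \<partial>lborel)"
    by (intro Bochner_Integration.integral_cong refl) (simp add: pderiv_pcompose poly_pcompose poly_pderiv_Hp pderiv_pCons mult_ac)
  also have "\<dots> = b * real (Suc n) * (\<integral>z. phi z * hermite n (a + b * z) \<partial>lborel)"
    by (rule Bochner_Integration.integral_mult_right_zero)
  finally show ?thesis .
qed

lemma int_phi_1: "(\<integral>z. phi z \<partial>lborel) = 1"
  using integral_normal_density[of 0 1] by simp

lemma hermite_add:
  assumes "u1\<^sup>2 + u2\<^sup>2 = 1"
  shows "(\<integral>z. phi z * hermite n (u1 * s + u2 * z) \<partial>lborel) = u1 ^ n * hermite n s"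
proof -
  define Q where "Q n = (\<integral>z. phi z * hermite n (u1 * s + u2 * z) \<partial>lborel)" for n
  have "Q n = u1 ^ n * hermite n s \<and> Q (Suc n) = u1 ^ Suc n * hermite (Suc n) s"
  proof (induction n)
    case 0
    have "Q 0 = 1" unfolding Q_def using int_phi_1 by simp
    moreover have "Q 1 = u1 * s"
    proof -
      have "Q 1 = (\<integral>z. u1 * s * phi z + u2 * (phi z * z) \<partial>lborel)"
        unfolding Q_def by (intro Bochner_Integration.integral_cong) (auto simp: algebra_simps)
      also have "\<dots> = u1 * s * (\<integral>z. phi z \<partial>lborel) + u2 * (\<integral>z. phi z * z \<partial>lborel)"
        using integrable_std_normal_moment[of 1]
        by (subst Bochner_Integration.integral_add) (auto)
      also have "(\<integral>z. phi z * z \<partial>lborel) = 0"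
        using integral_std_normal_moment_odd[of 0] by simp
      finally show ?thesis using int_phi_1 by simp
    qed
    ultimately show ?case by simp
  next
    case (Suc n)
    have IH: "Q n = u1 ^ n * hermite n s" "Q (Suc n) = u1 ^ Suc n * hermite (Suc n) s" using Suc by auto
    have i1: "integrable lborel (\<lambda>z. u1 * s * (phi z * hermite (Suc n) (u1 * s + u2 * z)))"
      by (intro integrable_mult_right int_herm)
    have i2: "integrable lborel (\<lambda>z. u2 * (phi z * (z * hermite (Suc n) (u1 * s + u2 * z))))"
      by (intro integrable_mult_right int_herm_z)
    have i3: "integrable lborel (\<lambda>z. real (Suc n) * (phi z * hermite n (u1 * s + u2 * z)))"
      by (intro integrable_mult_right int_herm)
    have "Q (Suc (Suc n)) = (\<integral>z. u1 * s * (phi z * hermite (Suc n) (u1 * s + u2 * z))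
        + u2 * (phi z * (z * hermite (Suc n) (u1 * s + u2 * z)))
        - real (Suc n) * (phi z * hermite n (u1 * s + u2 * z)) \<partial>lborel)"
      unfolding Q_def by (intro Bochner_Integration.integral_cong refl) (simp add: hermite_rec algebra_simps)
    also have "(\<integral>z. u1 * s * (phi z * hermite (Suc n) (u1 * s + u2 * z))
        + u2 * (phi z * (z * hermite (Suc n) (u1 * s + u2 * z)))
        - real (Suc n) * (phi z * hermite n (u1 * s + u2 * z)) \<partial>lborel)
      = (\<integral>z. u1 * s * (phi z * hermite (Suc n) (u1 * s + u2 * z))
        + u2 * (phi z * (z * hermite (Suc n) (u1 * s + u2 * z))) \<partial>lborel)
        - (\<integral>z. real (Suc n) * (phi z * hermite n (u1 * s + u2 * z)) \<partial>lborel)"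
      by (rule Bochner_Integration.integral_diff[OF Bochner_Integration.integrable_add[OF i1 i2] i3])
    also have "\<dots> = u1 * s * Q (Suc n) + u2 * (u2 * real (Suc n) * Q n) - real (Suc n) * Q n"
      unfolding Q_def Bochner_Integration.integral_add[OF i1 i2]
      using stein_herm[of n "u1 * s" u2] by simp
    finally have q2: "Q (Suc (Suc n)) = u1 * s * Q (Suc n) + u2 * (u2 * real (Suc n) * Q n) - real (Suc n) * Q n" .
    have u2sq: "u2 * u2 = 1 - u1\<^sup>2" using assms by (simp add: power2_eq_square)
    have "u2 * (u2 * real (Suc n) * Q n) = (u2 * u2) * (real (Suc n) * Q n)" by (simp add: mult_ac)
    also have "\<dots> = (1 - u1\<^sup>2) * (real (Suc n) * Q n)" unfolding u2sq ..
    finally have "Q (Suc (Suc n)) = u1 * s * Q (Suc n) - u1\<^sup>2 * real (Suc n) * Q n"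
      using q2 by (simp add: algebra_simps)
    then have "Q (Suc (Suc n)) = u1 ^ Suc (Suc n) * (s * hermite (Suc n) s - real (Suc n) * hermite n s)"
      unfolding IH by (simp add: algebra_simps power2_eq_square)
    then show ?case using IH by (simp add: hermite_rec)
  qed
  then show ?thesis unfolding Q_def by blast
qed


lemma int_herm1[intro]: "integrable lborel (\<lambda>z. phi z * hermite n z)"
  using int_poly[of "Hp n"] unfolding poly_Hp .

lemma phi_deriv: "(phi has_real_derivative (- x * phi x)) (at x)"
  unfolding std_normal_density_def
  by (auto intro!: derivative_eq_intros simp: power2_eq_square field_simps)

lemma phi_herm_deriv: "((\<lambda>x. phi x * hermite n x) has_real_derivative (- (phi x * hermite (Suc n) x))) (at x)"
proof -
  have h: "x * hermite n x - (if n = 0 then 0 else real n * hermite (n - 1) x) = hermite (Suc n) x"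
  proof (cases n)
    case 0 then show ?thesis by simp
  next
    case (Suc m) then show ?thesis by (simp add: hermite_rec)
  qed
  have d: "(hermite n has_real_derivative (if n = 0 then 0 else real n * hermite (n - 1) x)) (at x)"
  proof (cases n)
    case 0
    have "hermite 0 = (\<lambda>_. 1)" by (rule ext) simp
    then show ?thesis using 0 by simp
  next
    case (Suc m) then show ?thesis using hermite_deriv[of m x] by simp
  qed
  have "((\<lambda>x. phi x * hermite n x) has_real_derivative
     (- x * phi x) * hermite n x + (if n = 0 then 0 else real n * hermite (n - 1) x) * phi x) (at x)"
    by (rule DERIV_mult[OF phi_deriv d])
  moreover have "(- x * phi x) * hermite n x + (if n = 0 then 0 else real n * hermite (n - 1) x) * phi x
     = - (phi x * hermite (Suc n) x)"
    unfolding h[symmetric] by (simp add: algebra_simps)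
  ultimately show ?thesis by simp
qed

lemma pow_exp_lim: "((\<lambda>x::real. x ^ k * phi x) \<longlongrightarrow> 0) at_top"
proof -
  have l: "((\<lambda>x::real. (x ^ k / exp x) / sqrt (2 * pi)) \<longlongrightarrow> 0 / sqrt (2 * pi)) at_top"
    by (intro tendsto_divide tendsto_power_div_exp_0 tendsto_const) simp
  show ?thesis
  proof (rule tendsto_sandwich[of "\<lambda>_. 0" _ _ "\<lambda>x. (x ^ k / exp x) / sqrt (2 * pi)"])
    show "\<forall>\<^sub>F x in at_top. 0 \<le> x ^ k * phi x"
      using eventually_ge_at_top[of 0] by eventually_elim simp
    show "\<forall>\<^sub>F x in at_top. x ^ k * phi x \<le> (x ^ k / exp x) / sqrt (2 * pi)"
      using eventually_ge_at_top[of 2]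
    proof eventually_elim
      case (elim x)
      have "x \<le> x\<^sup>2 / 2" using elim by (simp add: power2_eq_square field_simps)
      then have "exp (- x\<^sup>2 / 2) \<le> exp (- x)" by simp
      also have "exp (- x) = 1 / exp x" by (simp add: exp_minus field_simps)
      finally have e: "exp (- x\<^sup>2 / 2) \<le> 1 / exp x" .
      have "x ^ k * exp (- x\<^sup>2 / 2) \<le> x ^ k * (1 / exp x)"
        using elim e by (intro mult_left_mono) auto
      then show ?case unfolding std_normal_density_def
        by (simp add: field_simps)
    qed
  qed (use l in auto)
qed

lemma phi_herm_lim: "((\<lambda>x. phi x * hermite n x) \<longlongrightarrow> 0) at_top"
proof -
  have "(\<lambda>x. phi x * hermite n x) = (\<lambda>x. \<Sum>k\<le>degree (Hp n). coeff (Hp n) k * (x ^ k * phi x))"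
    unfolding poly_Hp[symmetric] poly_altdef by (simp add: sum_distrib_left mult_ac)
  moreover have "((\<lambda>x. \<Sum>k\<le>degree (Hp n). coeff (Hp n) k * (x ^ k * phi x)) \<longlongrightarrow> 0) at_top"
    using tendsto_sum[of "{..degree (Hp n)}" "\<lambda>k x. coeff (Hp n) k * (x ^ k * phi x)" "\<lambda>_. 0"]
      tendsto_mult_right_zero[OF pow_exp_lim] by simp
  ultimately show ?thesis by simp
qed

lemma tail_integral:
  "(\<integral>s. indicator {t..} s * (phi s * hermite (Suc n) s) \<partial>lborel) = phi t * hermite n t"
proof -
  let ?f = "\<lambda>s. phi s * hermite (Suc n) s"
  let ?F = "\<lambda>x. - (phi x * hermite n x)"
  have cont: "isCont ?F x" for x
    using phi_herm_deriv[of n x] by (intro continuous_intros DERIV_isCont)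
  have "(LBINT x=ereal t..\<infinity>. ?f x) = 0 - ?F t"
  proof (rule interval_integral_FTC_integrable)
    show "ereal t < \<infinity>" by simp
    show "(?F has_vector_derivative ?f x) (at x)" for x
      using DERIV_minus[OF phi_herm_deriv[of n x]]
      by (simp add: has_real_derivative_iff_has_vector_derivative)
    show "isCont ?f x" for x
      by (intro continuous_intros hermite_isCont DERIV_isCont[OF phi_deriv])
    show "set_integrable lborel (einterval (ereal t) \<infinity>) ?f"
      unfolding set_integrable_def by (intro integrable_mult_indicator int_herm1) auto
    show "((?F \<circ> real_of_ereal) \<longlongrightarrow> ?F t) (at_right (ereal t))"
      unfolding ereal_tendsto_simps
    proof -
      have "(?F \<longlongrightarrow> ?F t) (at t)" using cont[of t] unfolding isCont_def .
      then show "(?F \<longlongrightarrow> ?F t) (at_right t)" using filterlim_at_split by blast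
    qed
    show "((?F \<circ> real_of_ereal) \<longlongrightarrow> 0) (at_left \<infinity>)"
      unfolding ereal_tendsto_simps using tendsto_minus[OF phi_herm_lim[of n]] by simp
  qed
  then have "(\<integral>s. indicator {t<..} s * ?f s \<partial>lborel) = phi t * hermite n t"
    by (simp add: interval_lebesgue_integral_def set_lebesgue_integral_def)
  moreover have "(\<integral>s. indicator {t<..} s * ?f s \<partial>lborel) = (\<integral>s. indicator {t..} s * ?f s \<partial>lborel)"
  proof (rule integral_cong_AE)
    show "(\<lambda>s. indicator {t<..} s * ?f s) \<in> borel_measurable lborel" by measurable
    show "(\<lambda>s. indicator {t..} s * ?f s) \<in> borel_measurable lborel" by measurable
    show "AE s in lborel. indicator {t<..} s * ?f s = indicator {t..} s * ?f s"
      using AE_lborel_singleton[of t]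
    proof (rule AE_mp)
      show "AE s in lborel. s \<noteq> t \<longrightarrow> indicator {t<..} s * ?f s = indicator {t..} s * ?f s"
        by (rule AE_I2) (simp add: indicator_def)
    qed
  qed
  ultimately show ?thesis by simp
qed


lemma phi_le1: "phi x \<le> 1"
proof -
  have "exp (- x\<^sup>2 / 2) \<le> 1" by simp
  moreover have "1 / sqrt (2 * pi) \<le> 1"
    using pi_gt3 by (simp add: field_simps real_le_rsqrt)
  ultimately have "(1 / sqrt (2 * pi)) * exp (- x\<^sup>2 / 2) \<le> 1 * 1"
    by (intro mult_mono) auto
  then show ?thesis unfolding std_normal_density_def by simp
qed

lemma phi_even: "phi (- x) = phi x"
  unfolding std_normal_density_def by simp

lemma nd_affine: "u > 0 \<Longrightarrow> normal_density m u (m + u * z) = phi z / u"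
  unfolding normal_density_def std_normal_density_def
  by (simp add: real_sqrt_mult power2_eq_square field_simps)

lemma cs:
  assumes "u1\<^sup>2 + u2\<^sup>2 = 1" "u2 > 0"
  shows "phi a * normal_density (a * u1) u2 s = phi s * normal_density (s * u1) u2 a"
proof -
  have e: "a\<^sup>2 * u2\<^sup>2 + (s - a * u1)\<^sup>2 = s\<^sup>2 * u2\<^sup>2 + (a - s * u1)\<^sup>2"
    using assms(1) by algebra
  have "- a\<^sup>2 / 2 + - (s - a * u1)\<^sup>2 / (2 * u2\<^sup>2) = - s\<^sup>2 / 2 + - (a - s * u1)\<^sup>2 / (2 * u2\<^sup>2)"
    using e assms(2) by (simp add: field_simps)
  then have "exp (- a\<^sup>2 / 2) * exp (- (s - a * u1)\<^sup>2 / (2 * u2\<^sup>2)) = exp (- s\<^sup>2 / 2) * exp (- (a - s * u1)\<^sup>2 / (2 * u2\<^sup>2))"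
    by (simp add: exp_add[symmetric])
  then show ?thesis
    unfolding normal_density_def std_normal_density_def
    by (simp add: algebra_simps)
qed

lemma nd_meas[measurable]:
  assumes [measurable]: "f \<in> borel_measurable MM" "g \<in> borel_measurable MM"
  shows "(\<lambda>x. normal_density (f x) u (g x)) \<in> borel_measurable MM"
  unfolding normal_density_def by measurable

lemma nd_affine': "u > 0 \<Longrightarrow> normal_density m u (m + z * u) = phi z / u"
  using nd_affine[of u m z] by (simp add: mult.commute)

lemma int_nd_ind[intro]: "integrable lborel (\<lambda>s. indicator A s * normal_density m u s)" if "A \<in> sets borel" "u > 0"
  using integrable_mult_indicator[OF _ integrable_normal_density[where \<sigma>=u and \<mu>=m], of A] that by simp

lemma key_pos:
  assumes u: "u1\<^sup>2 + u2\<^sup>2 = 1" "u2 > 0"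
  shows "(\<integral>a. phi a * (hermite n a * (\<integral>b. phi b * indicator {t..} (a * u1 + b * u2) \<partial>lborel)) \<partial>lborel)
     = u1 ^ n * (\<integral>s. indicator {t..} s * (phi s * hermite n s) \<partial>lborel)"
proof -

  define H where "H a s = hermite n a * (phi s * (indicator {t..} s * normal_density (s * u1) u2 a))" for a s
  have inner: "(\<integral>b. phi b * indicator {t..} (a * u1 + b * u2) \<partial>lborel)
      = (\<integral>s. indicator {t..} s * normal_density (a * u1) u2 s \<partial>lborel)" for a
  proof -
    have "(\<integral>s. indicator {t..} s * normal_density (a * u1) u2 s \<partial>lborel)
       = \<bar>u2\<bar> * (\<integral>b. indicator {t..} (a * u1 + u2 * b) * normal_density (a * u1) u2 (a * u1 + u2 * b) \<partial>lborel)"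
      using lborel_integral_real_affine[of u2 "\<lambda>s. indicator {t..} s * normal_density (a * u1) u2 s" "a * u1"] u(2)
      by simp
    also have "\<dots> = u2 * (\<integral>b. (1 / u2) * (phi b * indicator {t..} (a * u1 + b * u2)) \<partial>lborel)"
      using u(2) by (simp add: nd_affine nd_affine' mult_ac)
    also have "\<dots> = (\<integral>b. phi b * indicator {t..} (a * u1 + b * u2) \<partial>lborel)"
      using u(2) by simp
    finally show ?thesis by simp
  qed
  have step1: "phi a * (hermite n a * (\<integral>b. phi b * indicator {t..} (a * u1 + b * u2) \<partial>lborel)) = (\<integral>s. H a s \<partial>lborel)" for a
  proof -
    have "phi a * (hermite n a * (\<integral>b. phi b * indicator {t..} (a * u1 + b * u2) \<partial>lborel))
      = (\<integral>s. phi a * hermite n a * (indicator {t..} s * normal_density (a * u1) u2 s) \<partial>lborel)"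
      unfolding inner by simp
    also have "\<dots> = (\<integral>s. H a s \<partial>lborel)"
      unfolding H_def
      by (intro Bochner_Integration.integral_cong refl) (use cs[OF u, of a] in \<open>simp add: mult_ac\<close>)
    finally show ?thesis .
  qed
  have meas[measurable]: "case_prod H \<in> borel_measurable (lborel \<Otimes>\<^sub>M lborel)"
    unfolding H_def by measurable
  have intH: "integrable (lborel \<Otimes>\<^sub>M lborel) (case_prod H)"
  proof (rule lborel_pair.Fubini_integrable)
    show "case_prod H \<in> borel_measurable (lborel \<Otimes>\<^sub>M lborel)" by (rule meas)
    have bnd: "norm (\<integral>s. norm (case_prod H (a, s)) \<partial>lborel) \<le> norm (phi a * hermite n a)" for a
    proof -
      have "(\<integral>s. norm (case_prod H (a, s)) \<partial>lborel) = (\<integral>s. \<bar>hermite n a\<bar> * phi a * (indicator {t..} s * normal_density (a * u1) u2 s) \<partial>lborel)"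
        unfolding H_def
        by (intro Bochner_Integration.integral_cong refl)
           (use cs[OF u, of a] in \<open>simp add: abs_mult mult_ac\<close>)
      also have "\<dots> = \<bar>hermite n a\<bar> * phi a * (\<integral>s. indicator {t..} s * normal_density (a * u1) u2 s \<partial>lborel)"
        by simp
      also have "(\<integral>s. indicator {t..} s * normal_density (a * u1) u2 s \<partial>lborel) \<le> (\<integral>s. normal_density (a * u1) u2 s \<partial>lborel)"
        by (intro integral_mono int_nd_ind integrable_normal_density) (use u(2) in \<open>auto simp: indicator_def\<close>)
      also have "\<dots> = 1" using u(2) by simp
      finally have "(\<integral>s. norm (case_prod H (a, s)) \<partial>lborel) \<le> \<bar>hermite n a\<bar> * phi a"
        by (simp add: mult_left_mono)
      moreover have "0 \<le> (\<integral>s. norm (case_prod H (a, s)) \<partial>lborel)" by simp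
      ultimately show ?thesis by (simp add: abs_mult mult.commute)
    qed
    show "integrable lborel (\<lambda>a. \<integral>s. norm (case_prod H (a, s)) \<partial>lborel)"
      by (rule Bochner_Integration.integrable_bound[OF int_herm1[of n]]) (use bnd in auto)
    show "AE a in lborel. integrable lborel (\<lambda>s. case_prod H (a, s))"
    proof (rule AE_I2)
      fix a
      have "(\<lambda>s. case_prod H (a, s)) = (\<lambda>s. hermite n a * phi a * (indicator {t..} s * normal_density (a * u1) u2 s))"
        unfolding H_def using cs[OF u, of a] by (simp add: fun_eq_iff mult_ac)
      then show "integrable lborel (\<lambda>s. case_prod H (a, s))"
        using u(2) by (simp add: int_nd_ind)
    qed
  qed
  have inner2: "(\<integral>a. H a s \<partial>lborel) = u1 ^ n * (indicator {t..} s * (phi s * hermite n s))" for s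
  proof -
    have "(\<integral>a. hermite n a * normal_density (s * u1) u2 a \<partial>lborel)
      = \<bar>u2\<bar> * (\<integral>z. hermite n (s * u1 + u2 * z) * normal_density (s * u1) u2 (s * u1 + u2 * z) \<partial>lborel)"
      using lborel_integral_real_affine[of u2 "\<lambda>a. hermite n a * normal_density (s * u1) u2 a" "s * u1"] u(2)
      by simp
    also have "\<dots> = (\<integral>z. phi z * hermite n (u1 * s + u2 * z) \<partial>lborel)"
      using u(2) by (simp add: nd_affine nd_affine' mult_ac)
    also have "\<dots> = u1 ^ n * hermite n s" by (rule hermite_add[OF u(1)])
    finally have "(\<integral>a. hermite n a * normal_density (s * u1) u2 a \<partial>lborel) = u1 ^ n * hermite n s" .
    moreover have "(\<integral>a. H a s \<partial>lborel) = phi s * indicator {t..} s * (\<integral>a. hermite n a * normal_density (s * u1) u2 a \<partial>lborel)"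
    proof -
      have "(\<integral>a. H a s \<partial>lborel) = (\<integral>a. (phi s * indicator {t..} s) * (hermite n a * normal_density (s * u1) u2 a) \<partial>lborel)"
        unfolding H_def by (intro Bochner_Integration.integral_cong refl) (simp add: mult_ac)
      then show ?thesis by (simp only: Bochner_Integration.integral_mult_right_zero)
    qed
    ultimately show ?thesis by (simp add: mult_ac)
  qed
  have "(\<integral>a. phi a * (hermite n a * (\<integral>b. phi b * indicator {t..} (a * u1 + b * u2) \<partial>lborel)) \<partial>lborel)
      = (\<integral>a. (\<integral>s. H a s \<partial>lborel) \<partial>lborel)"
    unfolding step1 ..
  also have "\<dots> = (\<integral>s. (\<integral>a. H a s \<partial>lborel) \<partial>lborel)"
    by (rule lborel_pair.Fubini_integral[OF intH, symmetric])
  also have "\<dots> = (\<integral>s. u1 ^ n * (indicator {t..} s * (phi s * hermite n s)) \<partial>lborel)"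
    unfolding inner2 ..
  also have "\<dots> = u1 ^ n * (\<integral>s. indicator {t..} s * (phi s * hermite n s) \<partial>lborel)"
    by simp
  finally show ?thesis .
qed


lemma key:
  assumes u: "u1\<^sup>2 + u2\<^sup>2 = 1" "u2 \<ge> 0"
  shows "(\<integral>a. phi a * (hermite n a * (\<integral>b. phi b * indicator {t..} (a * u1 + b * u2) \<partial>lborel)) \<partial>lborel)
     = u1 ^ n * (\<integral>s. indicator {t..} s * (phi s * hermite n s) \<partial>lborel)"
proof (cases "u2 > 0")
  case True then show ?thesis using key_pos[OF u(1)] by blast
next
  case False
  then have u20: "u2 = 0" using u(2) by simp
  then have "u1\<^sup>2 = 1" using u(1) by simp
  then have u1: "u1 = 1 \<or> u1 = -1" by (simp add: power2_eq_1_iff)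
  have phi1: "(\<integral>b. phi b \<partial>lborel) = 1" by (rule int_phi_1)
  have "(\<integral>a. phi a * (hermite n a * (\<integral>b. phi b * indicator {t..} (a * u1 + b * u2) \<partial>lborel)) \<partial>lborel)
      = (\<integral>a. phi a * (hermite n a * indicator {t..} (a * u1)) \<partial>lborel)"
    unfolding u20 using phi1 by simp
  also have "\<dots> = u1 ^ n * (\<integral>s. indicator {t..} s * (phi s * hermite n s) \<partial>lborel)"
    using u1
  proof
    assume "u1 = 1" then show ?thesis by (simp add: mult_ac)
  next
    assume m: "u1 = -1"
    have "(\<integral>a. phi a * (hermite n a * indicator {t..} (a * u1)) \<partial>lborel)
      = (\<integral>s. phi (- s) * (hermite n (- s) * indicator {t..} (- s * u1)) \<partial>lborel)"
      using lborel_integral_real_affine[of "-1::real" "\<lambda>a. phi a * (hermite n a * indicator {t..} (a * u1))" 0] by simp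
    also have "\<dots> = (\<integral>s. (-1) ^ n * (indicator {t..} s * (phi s * hermite n s)) \<partial>lborel)"
      using m by (simp add: phi_even hermite_neg mult_ac)
    also have "\<dots> = u1 ^ n * (\<integral>s. indicator {t..} s * (phi s * hermite n s) \<partial>lborel)"
      using m by simp
    finally show ?thesis .
  qed
  finally show ?thesis .
qed

lemma sets_N[measurable_cong]: "sets std_normal = sets borel"
  by (simp add: std_normal_def)

lemma space_N[simp]: "space std_normal = UNIV"
  by (simp add: std_normal_def)

lemma prob_N: "prob_space std_normal"
  unfolding std_normal_def using prob_space_normal_density[of 1 0] by simp

lemma intN:
  assumes [measurable]: "f \<in> borel_measurable borel"
  shows "(\<integral>x. f x \<partial>std_normal) = (\<integral>x. phi x * f x \<partial>lborel)"
  unfolding std_normal_def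
  by (subst integral_density) auto

lemma integrableN:
  assumes [measurable]: "f \<in> borel_measurable borel"
  shows "integrable std_normal f \<longleftrightarrow> integrable lborel (\<lambda>x. phi x * f x)"
  unfolding std_normal_def
  by (subst integrable_density) auto

lemma int_const_N: "(\<integral>x. c \<partial>std_normal) = (c::real)"
  by (subst lebesgue_integral_const) (use prob_space.prob_space[OF prob_N] in simp)

lemma struct:
  fixes J :: "real \<Rightarrow> real"
  assumes Jm[measurable]: "J \<in> borel_measurable borel" and Jb: "\<And>c. \<bar>J c\<bar> \<le> 1"
    and u: "u1\<^sup>2 + u2\<^sup>2 = 1" "u2 \<ge> 0"
  shows "gauss_exp3 (\<lambda>a b c. hermite (Suc n) a * J c * indicator {0..} (a * u1 + b * u2 + c))
     = u1 ^ Suc n * (\<integral>c. J c * (phi (- c) * hermite n (- c)) \<partial>std_normal)"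
proof -
  let ?N = std_normal
  define t where "t a b c = hermite (Suc n) a * J c * indicator {0..} (a * u1 + b * u2 + c)" for a b c
  have teq: "(\<lambda>((a, b), c). t a b c) = (\<lambda>p. t (fst (fst p)) (snd (fst p)) (snd p))"
    by (rule ext) (auto split: prod.splits)
  have tm[measurable]: "(\<lambda>((a, b), c). t a b c) \<in> borel_measurable ((?N \<Otimes>\<^sub>M ?N) \<Otimes>\<^sub>M ?N)"
    unfolding teq unfolding t_def by measurable
  have pN: "prob_space ?N" by (rule prob_N)
  have pNN: "prob_space (?N \<Otimes>\<^sub>M ?N)" by (intro prob_space_pair pN)
  have PS0: "pair_sigma_finite ?N ?N"
    unfolding pair_sigma_finite_def using prob_space_imp_sigma_finite[OF pN] by simp
  have PS1: "pair_sigma_finite (?N \<Otimes>\<^sub>M ?N) ?N"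
    unfolding pair_sigma_finite_def using prob_space_imp_sigma_finite[OF pN] prob_space_imp_sigma_finite[OF pNN] by simp
  have fN: "finite_measure ?N" using pN by (simp add: prob_space_def)
  have fNN: "finite_measure (?N \<Otimes>\<^sub>M ?N)" using pNN by (simp add: prob_space_def)
  have cNN: "(\<integral>x. c \<partial>(?N \<Otimes>\<^sub>M ?N)) = c" for c :: real
    using prob_space.prob_space[OF pNN] by (simp add: lebesgue_integral_const)
  have i0: "integrable ?N (\<lambda>a. \<bar>hermite (Suc n) a\<bar>)"
  proof (subst integrableN)
    have "(\<lambda>x. phi x * \<bar>hermite (Suc n) x\<bar>) = (\<lambda>x. \<bar>phi x * hermite (Suc n) x\<bar>)"
      by (simp add: abs_mult fun_eq_iff)
    then show "integrable lborel (\<lambda>x. phi x * \<bar>hermite (Suc n) x\<bar>)"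
      using integrable_abs[OF int_herm1[of "Suc n"]] by simp
  qed measurable
  have i1: "integrable (?N \<Otimes>\<^sub>M ?N) (\<lambda>(a, b). \<bar>hermite (Suc n) a\<bar>)"
  proof (rule pair_sigma_finite.Fubini_integrable[OF PS0])
    show "(\<lambda>(a, b). \<bar>hermite (Suc n) a\<bar>) \<in> borel_measurable (?N \<Otimes>\<^sub>M ?N)" by measurable
    show "integrable ?N (\<lambda>a. \<integral>b. norm (case_prod (\<lambda>a b. \<bar>hermite (Suc n) a\<bar>) (a, b)) \<partial>?N)"
      using i0 by (simp add: int_const_N)
    show "AE a in ?N. integrable ?N (\<lambda>b. case_prod (\<lambda>a b. \<bar>hermite (Suc n) a\<bar>) (a, b))"
      by (auto intro!: AE_I2 finite_measure.integrable_const[OF fN])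
  qed
  have i2: "integrable ((?N \<Otimes>\<^sub>M ?N) \<Otimes>\<^sub>M ?N) (\<lambda>((a, b), c). \<bar>hermite (Suc n) a\<bar>)"
  proof (rule pair_sigma_finite.Fubini_integrable[OF PS1])
    have eq2: "(\<lambda>((a, b), c). \<bar>hermite (Suc n) a\<bar>) = (\<lambda>p. \<bar>hermite (Suc n) (fst (fst p))\<bar>)"
      by (rule ext) (auto split: prod.splits)
    then show "(\<lambda>((a, b), c). \<bar>hermite (Suc n) a\<bar>) \<in> borel_measurable ((?N \<Otimes>\<^sub>M ?N) \<Otimes>\<^sub>M ?N)"
      by (subst eq2) measurable
    show "integrable (?N \<Otimes>\<^sub>M ?N) (\<lambda>x. \<integral>c. norm ((\<lambda>((a, b), c). \<bar>hermite (Suc n) a\<bar>) (x, c)) \<partial>?N)"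
      using i1 by (simp add: int_const_N case_prod_beta')
    show "AE x in ?N \<Otimes>\<^sub>M ?N. integrable ?N (\<lambda>c. (\<lambda>((a, b), c). \<bar>hermite (Suc n) a\<bar>) (x, c))"
      by (auto intro!: AE_I2 finite_measure.integrable_const[OF fN] simp: case_prod_beta')
  qed
  have bnd: "\<bar>t a b c\<bar> \<le> \<bar>hermite (Suc n) a\<bar>" for a b c
  proof -
    have "\<bar>t a b c\<bar> = \<bar>hermite (Suc n) a\<bar> * (\<bar>J c\<bar> * indicator {0..} (a * u1 + b * u2 + c))"
      unfolding t_def by (simp add: abs_mult)
    also have "\<dots> \<le> \<bar>hermite (Suc n) a\<bar> * 1"
      using Jb[of c] by (intro mult_left_mono) (auto simp: indicator_def)
    finally show ?thesis by simp
  qed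
  have it: "integrable ((?N \<Otimes>\<^sub>M ?N) \<Otimes>\<^sub>M ?N) (\<lambda>((a, b), c). t a b c)"
    by (rule Bochner_Integration.integrable_bound[OF i2 tm]) (auto simp: bnd)
  have itc: "integrable (?N \<Otimes>\<^sub>M ?N) (\<lambda>(a, b). t a b c)" for c
  proof (rule Bochner_Integration.integrable_bound[OF i1])
    show "(\<lambda>(a, b). t a b c) \<in> borel_measurable (?N \<Otimes>\<^sub>M ?N)" unfolding t_def by measurable
  qed (auto simp: bnd)
  have "gauss_exp3 (\<lambda>a b c. hermite (Suc n) a * J c * indicator {0..} (a * u1 + b * u2 + c))
      = (\<integral>((a, b), c). t a b c \<partial>((?N \<Otimes>\<^sub>M ?N) \<Otimes>\<^sub>M ?N))"
    unfolding gauss_exp3_def t_def ..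
  also have "\<dots> = (\<integral>c. (\<integral>(a, b). t a b c \<partial>(?N \<Otimes>\<^sub>M ?N)) \<partial>?N)"
    using pair_sigma_finite.integral_snd[OF PS1, of "\<lambda>(a, b) c. t a b c"] it
    by (simp add: case_prod_beta')
  also have "\<dots> = (\<integral>c. J c * (u1 ^ Suc n * (phi (- c) * hermite n (- c))) \<partial>?N)"
  proof (intro Bochner_Integration.integral_cong refl)
    fix c
    have "(\<integral>(a, b). t a b c \<partial>(?N \<Otimes>\<^sub>M ?N)) = (\<integral>a. (\<integral>b. t a b c \<partial>?N) \<partial>?N)"
      using pair_sigma_finite.integral_fst[OF PS0, of "\<lambda>a b. t a b c"] itc[of c] by simp
    also have "\<dots> = (\<integral>a. phi a * (\<integral>b. phi b * t a b c \<partial>lborel) \<partial>lborel)"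
    proof -
      have i: "(\<integral>b. t a b c \<partial>?N) = (\<integral>b. phi b * t a b c \<partial>lborel)" for a
        by (rule intN) (unfold t_def, measurable)
      have pm: "(\<lambda>(a, b). phi b * t a b c) \<in> borel_measurable (borel \<Otimes>\<^sub>M lborel)"
        unfolding t_def by measurable
      have gm: "(\<lambda>a. \<integral>b. phi b * t a b c \<partial>lborel) \<in> borel_measurable borel"
        using lborel.borel_measurable_lebesgue_integral[OF pm] by simp
      show ?thesis unfolding i by (rule intN[OF gm])
    qed
    also have "\<dots> = J c * (\<integral>a. phi a * (hermite (Suc n) a * (\<integral>b. phi b * indicator {- c..} (a * u1 + b * u2) \<partial>lborel)) \<partial>lborel)"
    proof -
      have "phi a * (\<integral>b. phi b * t a b c \<partial>lborel) = J c * (phi a * (hermite (Suc n) a * (\<integral>b. phi b * indicator {- c..} (a * u1 + b * u2) \<partial>lborel)))" for a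
      proof -
        have "(\<integral>b. phi b * t a b c \<partial>lborel) = (\<integral>b. (hermite (Suc n) a * J c) * (phi b * indicator {- c..} (a * u1 + b * u2)) \<partial>lborel)"
          unfolding t_def by (intro Bochner_Integration.integral_cong refl) (simp add: indicator_def mult_ac)
        then show ?thesis by (simp add: mult_ac)
      qed
      then have "(\<integral>a. phi a * (\<integral>b. phi b * t a b c \<partial>lborel) \<partial>lborel) = (\<integral>a. J c * (phi a * (hermite (Suc n) a * (\<integral>b. phi b * indicator {- c..} (a * u1 + b * u2) \<partial>lborel))) \<partial>lborel)"
        by (intro Bochner_Integration.integral_cong refl)
      then show ?thesis by (simp only: Bochner_Integration.integral_mult_right_zero)
    qed
    also have "\<dots> = J c * (u1 ^ Suc n * (\<integral>s. indicator {- c..} s * (phi s * hermite (Suc n) s) \<partial>lborel))"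
      by (simp add: key[OF u])
    also have "\<dots> = J c * (u1 ^ Suc n * (phi (- c) * hermite n (- c)))"
      by (simp add: tail_integral)
    finally show "(\<integral>(a, b). t a b c \<partial>(?N \<Otimes>\<^sub>M ?N)) = J c * (u1 ^ Suc n * (phi (- c) * hermite n (- c)))" .
  qed
  also have "\<dots> = u1 ^ Suc n * (\<integral>c. J c * (phi (- c) * hermite n (- c)) \<partial>?N)"
    by (simp add: mult.left_commute[of "J _"])
  finally show ?thesis .
qed


lemma ht_abs: "\<bar>ht n k t\<bar> = (if 2 * k \<le> n then fact n / (fact k * fact (n - 2 * k) * 2 ^ k) * \<bar>t\<bar> ^ (n - 2 * k) else 0)"
  by (simp add: ht_def abs_mult power_abs)

lemma ratio:
  assumes k: "2 * k + 2 \<le> n" and t: "\<bar>t\<bar> \<le> 1 / (2 * (real n + 1))"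
  shows "8 * \<bar>ht n k t\<bar> \<le> \<bar>ht n (Suc k) t\<bar>"
proof -
  obtain r where n: "n = r + 2 * k + 2" using k by (metis add.commute le_Suc_ex add.assoc)
  have e1: "n - 2 * k = Suc (Suc r)" and e2: "n - 2 * Suc k = r" using n by auto
  define F D R P X T where "F = (fact n :: real)" "D = (fact k :: real)" "R = (fact r :: real)"
    "P = (2::real) ^ k" "X = \<bar>t\<bar> ^ r" "T = t\<^sup>2"
  have pos: "F > 0" "D > 0" "R > 0" "P > 0" "X \<ge> 0" "T \<ge> 0" by (auto simp: F_D_R_P_X_T_def)
  have a1: "\<bar>ht n k t\<bar> = F / (D * ((real r + 2) * ((real r + 1) * R)) * P) * (X * T)"
    unfolding ht_abs e1 F_D_R_P_X_T_def using k
    by (simp add: fact_Suc power2_eq_square power_abs algebra_simps)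
  have a2: "\<bar>ht n (Suc k) t\<bar> = F / ((real k + 1) * D * R * (2 * P)) * X"
    unfolding ht_abs e2 F_D_R_P_X_T_def using k
    by (simp add: fact_Suc algebra_simps)
  have tt: "T \<le> 1 / (4 * (real n + 1)\<^sup>2)"
  proof -
    have "\<bar>t\<bar>\<^sup>2 \<le> (1 / (2 * (real n + 1)))\<^sup>2" using t by (intro power_mono) auto
    then show ?thesis unfolding F_D_R_P_X_T_def by (simp add: power2_eq_square field_simps)
  qed
  have kn: "2 * (real k + 1) \<le> real n + 1" using k by simp
  have q: "16 * (real k + 1) * T \<le> 2"
  proof -
    have "16 * (real k + 1) * T \<le> 16 * (real k + 1) * (1 / (4 * (real n + 1)\<^sup>2))"
      using tt by (intro mult_left_mono) auto
    also have "\<dots> = 4 * (real k + 1) / (real n + 1)\<^sup>2"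
    proof -
      have "(real n + 1)\<^sup>2 > 0" by simp
      then show ?thesis by (simp add: field_simps)
    qed
    also have "\<dots> \<le> 2"
    proof -
      have "4 * (real k + 1) \<le> 2 * (real n + 1)" using kn by simp
      also have "\<dots> \<le> 2 * (real n + 1)\<^sup>2"
      proof -
        have "(real n + 1) * 1 \<le> (real n + 1) * (real n + 1)" by (intro mult_left_mono) auto
        then show ?thesis unfolding power2_eq_square by linarith
      qed
      finally show ?thesis by (simp add: field_simps)
    qed
    finally show ?thesis .
  qed
  have rr: "2 \<le> (real r + 2) * (real r + 1)" by (simp add: algebra_simps)
  have g: "\<And>c a. c > 0 \<Longrightarrow> a > 0 \<Longrightarrow> 16 * c * T \<le> a \<Longrightarrow>
     8 * (F / (D * (a * R) * P) * (X * T)) \<le> F / (c * D * R * (2 * P)) * X"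
  proof -
    fix c a :: real assume h: "c > 0" "a > 0" "16 * c * T \<le> a"
    have "8 * (F / (D * (a * R) * P) * (X * T)) = (F * X / (D * R * P)) * (8 * T / a)"
      using h pos by (simp add: field_simps)
    also have "\<dots> \<le> (F * X / (D * R * P)) * (1 / (2 * c))"
    proof (rule mult_left_mono)
      show "8 * T / a \<le> 1 / (2 * c)" using h by (simp add: field_simps)
      show "0 \<le> F * X / (D * R * P)" using pos by simp
    qed
    also have "\<dots> = F / (c * D * R * (2 * P)) * X"
      using h pos by (simp add: field_simps)
    finally show "8 * (F / (D * (a * R) * P) * (X * T)) \<le> F / (c * D * R * (2 * P)) * X" .
  qed
  have "8 * (F / (D * (((real r + 2) * (real r + 1)) * R) * P) * (X * T)) \<le> F / ((real k + 1) * D * R * (2 * P)) * X"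
    by (rule g) (use q rr in auto)
  then show ?thesis unfolding a1 a2 by (simp add: mult_ac)
qed

lemma psum:
  assumes "k \<le> n div 2" and t: "\<bar>t\<bar> \<le> 1 / (2 * (real n + 1))"
  shows "(\<Sum>j<k. \<bar>ht n j t\<bar>) \<le> \<bar>ht n k t\<bar> / 7"
  using assms(1)
proof (induction k)
  case 0 then show ?case by simp
next
  case (Suc k)
  then have "(\<Sum>j<k. \<bar>ht n j t\<bar>) \<le> \<bar>ht n k t\<bar> / 7" by simp
  moreover have "8 * \<bar>ht n k t\<bar> \<le> \<bar>ht n (Suc k) t\<bar>"
    using Suc.prems t by (intro ratio) auto
  ultimately show ?case by simp
qed

lemma herm_split: "hermite n t = (\<Sum>j<n div 2. ht n j t) + ht n (n div 2) t"
proof -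
  have "hermite n t = (\<Sum>j\<le>n div 2. ht n j t)"
    unfolding hermite_ht by (rule sum.mono_neutral_right) (auto simp: ht_def)
  also have "\<dots> = (\<Sum>j<n div 2. ht n j t) + ht n (n div 2) t"
    by (simp add: lessThan_Suc_atMost[symmetric])
  finally show ?thesis .
qed

lemma herm_near:
  assumes t: "\<bar>t\<bar> \<le> 1 / (2 * (real n + 1))"
  shows "\<bar>hermite n t - ht n (n div 2) t\<bar> \<le> \<bar>ht n (n div 2) t\<bar> / 7"
proof -
  have "\<bar>hermite n t - ht n (n div 2) t\<bar> = \<bar>\<Sum>j<n div 2. ht n j t\<bar>"
    by (simp add: herm_split)
  also have "\<dots> \<le> (\<Sum>j<n div 2. \<bar>ht n j t\<bar>)" by (rule sum_abs)
  also have "\<dots> \<le> \<bar>ht n (n div 2) t\<bar> / 7" by (rule psum[OF order_refl t])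
  finally show ?thesis .
qed

lemma dfact_odd: "real (dfact (2 * j + 1)) * 2 ^ j * fact j = fact (2 * j + 1)"
proof (induction j)
  case 0 then show ?case by simp
next
  case (Suc j)
  have d: "dfact (2 * Suc j + 1) = (2 * j + 3) * dfact (2 * j + 1)"
    by (simp add: numeral_eq_Suc)
  have "real (dfact (2 * Suc j + 1)) * 2 ^ Suc j * fact (Suc j)
      = (real (2 * j + 3) * real (2 * j + 2)) * (real (dfact (2 * j + 1)) * 2 ^ j * fact j)"
    unfolding d by (simp add: fact_Suc algebra_simps)
  also have "\<dots> = fact (2 * Suc j + 1)"
    unfolding Suc.IH by (simp add: fact_Suc algebra_simps numeral_eq_Suc)
  finally show ?case .
qed

lemma dfact_even: "real (dfact (2 * j)) = 2 ^ j * fact j"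
proof (induction j)
  case 0 then show ?case by simp
next
  case (Suc j)
  have d: "dfact (2 * Suc j) = (2 * j + 2) * dfact (2 * j)"
    by (simp add: numeral_eq_Suc)
  show ?case unfolding d using Suc.IH by (simp add: fact_Suc algebra_simps)
qed

lemma sq_bound: "(2 ^ j * fact j :: real)\<^sup>2 \<le> real (2 * j + 1) * fact (2 * j)"
proof (induction j)
  case 0 then show ?case by simp
next
  case (Suc j)
  have "(2 ^ Suc j * fact (Suc j) :: real)\<^sup>2 = (4 * (real j + 1)\<^sup>2) * (2 ^ j * fact j)\<^sup>2"
    by (simp add: fact_Suc power2_eq_square algebra_simps)
  also have "\<dots> \<le> (4 * (real j + 1)\<^sup>2) * (real (2 * j + 1) * fact (2 * j))"
    using Suc.IH by (intro mult_left_mono) auto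
  also have "\<dots> \<le> ((2 * real j + 3) * (2 * real j + 2)) * (real (2 * j + 1) * fact (2 * j))"
    by (intro mult_right_mono) (auto simp: power2_eq_square algebra_simps)
  also have "\<dots> = real (2 * Suc j + 1) * fact (2 * Suc j)"
    by (simp add: fact_Suc algebra_simps numeral_eq_Suc)
  finally show ?case .
qed

lemma phi_sq_lb: "\<bar>t\<bar> \<le> 1 / 2 \<Longrightarrow> phi t * phi t \<ge> 3 / 32"
proof -
  assume t: "\<bar>t\<bar> \<le> 1 / 2"
  have "t\<^sup>2 \<le> (1/2)\<^sup>2" using t by (metis abs_ge_zero power2_abs power_mono)
  then have "- t\<^sup>2 \<ge> - 1 / 4" by (simp add: power2_eq_square)
  then have "exp (- t\<^sup>2) \<ge> 3 / 4"
    using exp_ge_add_one_self[of "- t\<^sup>2"] by linarith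
  moreover have "phi t * phi t = exp (- t\<^sup>2) / (2 * pi)"
    unfolding std_normal_density_def
    by (simp add: exp_add[symmetric] power2_eq_square field_simps)
  moreover have "2 * pi < 8" using pi_less_4 by simp
  ultimately have h: "2 * pi * (phi t * phi t) \<ge> 3 / 4" "2 * pi < 8" using pi_gt3 by (simp_all add: field_simps)
  have p0: "phi t * phi t \<ge> 0" by simp
  have "2 * pi * (phi t * phi t) \<le> 8 * (phi t * phi t)"
    using h(2) p0 by (intro mult_right_mono) auto
  then show ?thesis using h(1) by linarith
qed


definition Kd :: "(real \<Rightarrow> real) \<Rightarrow> nat \<Rightarrow> real" where
  "Kd J n = (\<integral>c. J c * (phi (- c) * hermite n (- c)) \<partial>std_normal)"

lemma Kform:
  assumes [measurable]: "J \<in> borel_measurable borel"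
  shows "Kd J n = (\<integral>t. J (- t) * (phi t * (phi t * hermite n t)) \<partial>lborel)"
proof -
  have "Kd J n = (\<integral>c. phi c * (J c * (phi (- c) * hermite n (- c))) \<partial>lborel)"
    unfolding Kd_def by (rule intN) measurable
  also have "\<dots> = (\<integral>t. J (- t) * (phi t * (phi t * hermite n t)) \<partial>lborel)"
    using lborel_integral_real_affine[of "-1::real" "\<lambda>c. phi c * (J c * (phi (- c) * hermite n (- c)))" 0]
    by (simp add: phi_even mult_ac)
  finally show ?thesis .
qed

lemma lb_int:
  fixes Jm :: "real \<Rightarrow> real" and \<sigma> B a b :: real
  assumes [measurable]: "Jm \<in> borel_measurable borel" and Jb: "\<And>t. \<bar>Jm t\<bar> \<le> 1" and ab: "a \<le> b"
    and nn: "\<And>t. 0 \<le> \<sigma> * (Jm t * (phi t * (phi t * hermite n t)))"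
    and lb: "\<And>t. t \<in> {a..b} \<Longrightarrow> B \<le> \<sigma> * (Jm t * (phi t * (phi t * hermite n t)))"
  shows "B * (b - a) \<le> \<sigma> * (\<integral>t. Jm t * (phi t * (phi t * hermite n t)) \<partial>lborel)"
proof -
  let ?g = "\<lambda>t. Jm t * (phi t * (phi t * hermite n t))"
  have gi: "integrable lborel ?g"
  proof (rule Bochner_Integration.integrable_bound[OF int_herm1[of n]])
    show "?g \<in> borel_measurable lborel" by measurable
    show "AE t in lborel. norm (?g t) \<le> norm (phi t * hermite n t)"
    proof (rule AE_I2)
      fix t
      have "\<bar>?g t\<bar> = (\<bar>Jm t\<bar> * phi t) * (phi t * \<bar>hermite n t\<bar>)" by (simp add: abs_mult mult_ac)
      also have "\<dots> \<le> (1 * 1) * (phi t * \<bar>hermite n t\<bar>)"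
        using Jb[of t] phi_le1[of t] by (intro mult_right_mono mult_mono) auto
      finally show "norm (?g t) \<le> norm (phi t * hermite n t)" by (simp add: abs_mult)
    qed
  qed
  have hb: "has_bochner_integral lborel (\<lambda>t. indicator {a..b} t *\<^sub>R B) (measure lborel {a..b} *\<^sub>R B)"
    by (rule has_bochner_integral_indicator) (auto simp: ab emeasure_lborel_Icc)
  have "B * (b - a) = (\<integral>t. indicator {a..b} t * B \<partial>lborel)"
    using has_bochner_integral_integral_eq[OF hb] ab by simp
  also have "\<dots> \<le> (\<integral>t. \<sigma> * ?g t \<partial>lborel)"
  proof (rule integral_mono)
    show "integrable lborel (\<lambda>t. indicator {a..b} t * B)"
      using integrable.intros[OF hb] by simp
    show "integrable lborel (\<lambda>t. \<sigma> * ?g t)" using gi by simp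
    show "indicator {a..b} t * B \<le> \<sigma> * ?g t" for t
      using lb[of t] nn[of t] by (auto simp: indicator_def)
  qed
  also have "\<dots> = \<sigma> * (\<integral>t. ?g t \<partial>lborel)" by simp
  finally show ?thesis .
qed

lemma K_even:
  assumes n: "n = 2 * j + 1"
  defines "\<delta> \<equiv> 1 / (2 * real (Suc n))"
  shows "\<bar>Kd (\<lambda>c. indicator {0..\<delta>} (- c)) n\<bar> \<ge> real (dfact n) / (200 * real (Suc n) ^ 2)"
proof -
  define D where "D = real (dfact n)"
  define \<sigma> :: real where "\<sigma> = (-1) ^ j"
  have \<sigma>sq: "\<sigma> * \<sigma> = 1" unfolding \<sigma>_def by (simp add: power_mult_distrib[symmetric])
  have \<sigma>abs: "\<bar>\<sigma>\<bar> = 1" unfolding \<sigma>_def by simp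
  have \<delta>pos: "\<delta> > 0" and \<delta>le: "\<delta> \<le> 1 / 2" unfolding \<delta>_def by (auto simp: field_simps)
  have \<delta>eq: "\<delta> = 1 / (2 * (real n + 1))" unfolding \<delta>_def by simp
  have Dpos: "D > 0" unfolding D_def
  proof -
    have "real (dfact n) * 2 ^ j * fact j > 0" unfolding n using dfact_odd[of j] by simp
    then show "real (dfact n) > 0" by (simp add: zero_less_mult_iff)
  qed
  have L: "ht n (n div 2) t = \<sigma> * D * t" for t
  proof -
    have nd: "n div 2 = j" "n - 2 * j = 1" using n by auto
    have De: "fact n / (fact j * 2 ^ j) = D"
      unfolding D_def n using dfact_odd[of j] by (simp add: field_simps)
    have c: "2 * j \<le> n" using n by simp
    have "ht n (n div 2) t = (if 2 * j \<le> n then (-1) ^ j * fact n / (fact j * fact (n - 2 * j) * 2 ^ j) * t ^ (n - 2 * j) else 0)"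
      unfolding ht_def nd(1) ..
    also have "\<dots> = (-1) ^ j * fact n / (fact j * fact 1 * 2 ^ j) * t ^ 1"
      unfolding nd(2) using c by (simp only: if_True)
    also have "\<dots> = (-1) ^ j * (fact n / (fact j * 2 ^ j)) * t"
      by simp
    also have "\<dots> = \<sigma> * D * t" unfolding De \<sigma>_def ..
    finally show ?thesis .
  qed
  have near: "\<sigma> * hermite n t \<ge> 6 / 7 * D * t" if "0 \<le> t" "t \<le> \<delta>" for t
  proof -
    have "\<bar>hermite n t - \<sigma> * D * t\<bar> \<le> \<bar>\<sigma> * D * t\<bar> / 7"
      using herm_near[of t n] that \<delta>eq by (simp add: L)
    also have "\<bar>\<sigma> * D * t\<bar> = D * t" using that Dpos by (simp add: abs_mult \<sigma>abs)
    finally have h: "\<bar>hermite n t - \<sigma> * D * t\<bar> \<le> D * t / 7" .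
    have "\<bar>\<sigma> * hermite n t - D * t\<bar> = \<bar>\<sigma> * (hermite n t - \<sigma> * D * t)\<bar>"
      by (simp only: right_diff_distrib \<sigma>sq mult.assoc[symmetric] mult_1)
    also have "\<dots> = \<bar>hermite n t - \<sigma> * D * t\<bar>" by (simp add: abs_mult \<sigma>abs)
    finally show ?thesis using h by linarith
  qed
  let ?Jm = "\<lambda>t::real. indicator {0..\<delta>} t :: real"
  have Kf: "Kd (\<lambda>c. indicator {0..\<delta>} (- c)) n = (\<integral>t. ?Jm t * (phi t * (phi t * hermite n t)) \<partial>lborel)"
    by (subst Kform) auto
  define B where "B = 3 / 32 * (6 / 7 * D * (\<delta> / 2))"
  have "B * (\<delta> - \<delta> / 2) \<le> \<sigma> * (\<integral>t. ?Jm t * (phi t * (phi t * hermite n t)) \<partial>lborel)"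
  proof (rule lb_int)
    show "?Jm \<in> borel_measurable borel" by measurable
    show "\<bar>?Jm t\<bar> \<le> 1" for t by (simp add: indicator_def)
    show "\<delta> / 2 \<le> \<delta>" using \<delta>pos by simp
    show "0 \<le> \<sigma> * (?Jm t * (phi t * (phi t * hermite n t)))" for t
    proof (cases "t \<in> {0..\<delta>}")
      case True
      then have "0 \<le> 6 / 7 * D * t" using Dpos by simp
      also have "\<dots> \<le> \<sigma> * hermite n t" using near True by auto
      finally have "0 \<le> (phi t * phi t) * (\<sigma> * hermite n t)" by simp
      then show ?thesis using True by (simp add: mult_ac)
    qed simp
    show "B \<le> \<sigma> * (?Jm t * (phi t * (phi t * hermite n t)))" if t: "t \<in> {\<delta> / 2..\<delta>}" for t
    proof -
      have t0: "0 \<le> t" "t \<le> \<delta>" using t \<delta>pos by auto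
      have "6 / 7 * D * (\<delta> / 2) \<le> 6 / 7 * D * t" using t Dpos by simp
      also have "\<dots> \<le> \<sigma> * hermite n t" using near t0 by auto
      finally have a: "6 / 7 * D * (\<delta> / 2) \<le> \<sigma> * hermite n t" .
      have b: "3 / 32 \<le> phi t * phi t" using t0 \<delta>le by (intro phi_sq_lb) auto
      have "B \<le> (phi t * phi t) * (\<sigma> * hermite n t)"
        unfolding B_def by (rule mult_mono[OF b a]) (use Dpos \<delta>pos in auto)
      then show ?thesis using t0 by (simp add: mult_ac)
    qed
  qed
  then have "B * (\<delta> / 2) \<le> \<sigma> * Kd (\<lambda>c. indicator {0..\<delta>} (- c)) n" unfolding Kf by simp
  also have "\<dots> \<le> \<bar>Kd (\<lambda>c. indicator {0..\<delta>} (- c)) n\<bar>"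
    using \<sigma>abs by (metis abs_ge_self abs_mult mult_1 mult.commute)
  finally have main: "B * (\<delta> / 2) \<le> \<bar>Kd (\<lambda>c. indicator {0..\<delta>} (- c)) n\<bar>" .
  have e: "B * (\<delta> / 2) = (D * (9 / 1792)) / real (Suc n) ^ 2"
    unfolding B_def \<delta>_def by (simp add: field_simps power2_eq_square)
  have "real (dfact n) / (200 * real (Suc n) ^ 2) = (D / 200) / real (Suc n) ^ 2"
    unfolding D_def by simp
  also have "\<dots> \<le> (D * (9 / 1792)) / real (Suc n) ^ 2"
    by (rule divide_right_mono) (use Dpos in auto)
  finally have "real (dfact n) / (200 * real (Suc n) ^ 2) \<le> B * (\<delta> / 2)" unfolding e .
  then show ?thesis using main by linarith
qed

lemma K_odd:
  assumes n: "n = 2 * j"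
  defines "\<delta> \<equiv> 1 / (2 * real (Suc n))"
  shows "\<bar>Kd (\<lambda>c. indicator {- \<delta>..\<delta>} c) n\<bar> \<ge> real (dfact n) / (200 * real (Suc n) ^ 2)"
proof -
  define cf where "cf = (fact n / (fact j * 2 ^ j) :: real)"
  define E where "E = (2 ^ j * fact j :: real)"
  define \<sigma> :: real where "\<sigma> = (-1) ^ j"
  have \<sigma>sq: "\<sigma> * \<sigma> = 1" unfolding \<sigma>_def by (simp add: power_mult_distrib[symmetric])
  have \<sigma>abs: "\<bar>\<sigma>\<bar> = 1" unfolding \<sigma>_def by simp
  have \<delta>pos: "\<delta> > 0" and \<delta>le: "\<delta> \<le> 1 / 2" unfolding \<delta>_def by (auto simp: field_simps)
  have \<delta>eq: "\<delta> = 1 / (2 * (real n + 1))" unfolding \<delta>_def by simp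
  have cfpos: "cf > 0" unfolding cf_def by simp
  have Epos: "E > 0" unfolding E_def by simp
  have L: "ht n (n div 2) t = \<sigma> * cf" for t
  proof -
    have nd: "n div 2 = j" "n - 2 * j = 0" using n by auto
    show ?thesis unfolding ht_def nd \<sigma>_def cf_def using n by (simp add: mult_ac)
  qed
  have near: "\<sigma> * hermite n t \<ge> 6 / 7 * cf" if "\<bar>t\<bar> \<le> \<delta>" for t
  proof -
    have "\<bar>hermite n t - \<sigma> * cf\<bar> \<le> \<bar>\<sigma> * cf\<bar> / 7"
      using herm_near[of t n] that \<delta>eq by (simp add: L)
    also have "\<bar>\<sigma> * cf\<bar> = cf" using cfpos by (simp add: abs_mult \<sigma>abs)
    finally have h: "\<bar>hermite n t - \<sigma> * cf\<bar> \<le> cf / 7" .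
    have "\<bar>\<sigma> * hermite n t - cf\<bar> = \<bar>\<sigma> * (hermite n t - \<sigma> * cf)\<bar>"
      by (simp only: right_diff_distrib \<sigma>sq mult.assoc[symmetric] mult_1)
    also have "\<dots> = \<bar>hermite n t - \<sigma> * cf\<bar>" by (simp add: abs_mult \<sigma>abs)
    finally show ?thesis using h by linarith
  qed
  let ?Jm = "\<lambda>t::real. indicator {- \<delta>..\<delta>} t :: real"
  have Kf: "Kd (\<lambda>c. indicator {- \<delta>..\<delta>} c) n = (\<integral>t. ?Jm t * (phi t * (phi t * hermite n t)) \<partial>lborel)"
  proof -
    have "Kd (\<lambda>c. indicator {- \<delta>..\<delta>} c) n = (\<integral>t. indicator {- \<delta>..\<delta>} (- t) * (phi t * (phi t * hermite n t)) \<partial>lborel)"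
      by (rule Kform) measurable
    also have "\<dots> = (\<integral>t. ?Jm t * (phi t * (phi t * hermite n t)) \<partial>lborel)"
      by (intro Bochner_Integration.integral_cong refl) (auto simp: indicator_def)
    finally show ?thesis .
  qed
  define B where "B = 3 / 32 * (6 / 7 * cf)"
  have "B * (\<delta> - - \<delta>) \<le> \<sigma> * (\<integral>t. ?Jm t * (phi t * (phi t * hermite n t)) \<partial>lborel)"
  proof (rule lb_int)
    show "?Jm \<in> borel_measurable borel" by measurable
    show "\<bar>?Jm t\<bar> \<le> 1" for t by (simp add: indicator_def)
    show "- \<delta> \<le> \<delta>" using \<delta>pos by simp
    show "0 \<le> \<sigma> * (?Jm t * (phi t * (phi t * hermite n t)))" for t
    proof (cases "t \<in> {- \<delta>..\<delta>}")
      case True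
      then have "0 \<le> 6 / 7 * cf" using cfpos by simp
      also have "\<dots> \<le> \<sigma> * hermite n t" using near True by auto
      finally have "0 \<le> (phi t * phi t) * (\<sigma> * hermite n t)" by simp
      then show ?thesis using True by (simp add: mult_ac)
    qed simp
    show "B \<le> \<sigma> * (?Jm t * (phi t * (phi t * hermite n t)))" if t: "t \<in> {- \<delta>..\<delta>}" for t
    proof -
      have t0: "\<bar>t\<bar> \<le> \<delta>" using t by auto
      have a: "6 / 7 * cf \<le> \<sigma> * hermite n t" using near t0 by auto
      have b: "3 / 32 \<le> phi t * phi t" using t0 \<delta>le by (intro phi_sq_lb) auto
      have "B \<le> (phi t * phi t) * (\<sigma> * hermite n t)"
        unfolding B_def by (rule mult_mono[OF b a]) (use cfpos in auto)
      then show ?thesis using t by (simp add: mult_ac)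
    qed
  qed
  then have "B * (2 * \<delta>) \<le> \<sigma> * Kd (\<lambda>c. indicator {- \<delta>..\<delta>} c) n" unfolding Kf by simp
  also have "\<dots> \<le> \<bar>Kd (\<lambda>c. indicator {- \<delta>..\<delta>} c) n\<bar>"
    using \<sigma>abs by (metis abs_ge_self abs_mult mult_1 mult.commute)
  finally have main: "B * (2 * \<delta>) \<le> \<bar>Kd (\<lambda>c. indicator {- \<delta>..\<delta>} c) n\<bar>" .
  have dE: "real (dfact n) = E" unfolding n E_def by (rule dfact_even)
  have Ecf: "E \<le> real (Suc n) * cf"
  proof -
    have "E * E \<le> real (Suc n) * fact n" using sq_bound[of j] unfolding n E_def by (simp add: power2_eq_square)
    also have "fact n = cf * E" unfolding cf_def E_def by (simp add: field_simps)
    finally have "E * E \<le> (real (Suc n) * cf) * E" by (simp add: mult_ac)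
    then show ?thesis using Epos by simp
  qed
  have "real (dfact n) / (200 * real (Suc n) ^ 2) \<le> real (Suc n) * cf / (200 * real (Suc n) ^ 2)"
    unfolding dE using Ecf by (intro divide_right_mono) auto
  also have "\<dots> = cf / (200 * real (Suc n))" by (simp add: power2_eq_square)
  also have "\<dots> \<le> B * (2 * \<delta>)"
    unfolding B_def \<delta>_def using cfpos by (simp add: field_simps)
  finally show ?thesis using main by linarith
qed

lemma dfact_pos: "dfact n > 0"
  by (induction n rule: dfact.induct) auto

lemma assemble:
  fixes C L :: real and J :: "real \<Rightarrow> real"
  assumes C: "C > 0" and Jm: "J \<in> borel_measurable borel" and Jb: "\<And>c. \<bar>J c\<bar> \<le> 1"
    and lb: "\<bar>Kd J n\<bar> \<ge> L" and Lpos: "L > 0"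
  shows "\<exists>q::real. \<bar>q\<bar> \<ge> L / C ^ Suc n \<and>
    (\<forall>x1::real. \<bar>x1\<bar> \<le> C \<longrightarrow> x1 ^ Suc n = (1 / q) * gauss_exp3 (\<lambda>a b c.
       hermite (Suc n) a * J c * indicator {0..} ((a * x1 + b * sqrt (C\<^sup>2 - x1\<^sup>2)) / C + c)))"
proof -
  define K where "K = Kd J n"
  have Kne: "K \<noteq> 0" using lb Lpos unfolding K_def by auto
  have Cp: "C ^ Suc n > 0" using C by simp
  define q where "q = K / C ^ Suc n"
  show ?thesis
  proof (intro exI conjI allI impI)
    show "\<bar>q\<bar> \<ge> L / C ^ Suc n"
      unfolding q_def K_def using lb Cp by (simp add: divide_right_mono)
    fix x1 :: real assume x1: "\<bar>x1\<bar> \<le> C"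
    define x2 where "x2 = sqrt (C\<^sup>2 - x1\<^sup>2)"
    define u1 where "u1 = x1 / C"
    define u2 where "u2 = x2 / C"
    have sq: "x1\<^sup>2 \<le> C\<^sup>2"
      using x1 by (metis abs_ge_zero power2_abs power_mono)
    have x2sq: "x2\<^sup>2 = C\<^sup>2 - x1\<^sup>2" unfolding x2_def using sq by simp
    have u: "u1\<^sup>2 + u2\<^sup>2 = 1"
      unfolding u1_def u2_def using x2sq C by (simp add: power_divide field_simps)
    have u2: "u2 \<ge> 0" unfolding u2_def x2_def by (rule divide_nonneg_pos) (use C sq in auto)
    have feq: "(\<lambda>a b c. hermite (Suc n) a * J c * indicator {0..} ((a * x1 + b * sqrt (C\<^sup>2 - x1\<^sup>2)) / C + c))
        = (\<lambda>a b c. hermite (Suc n) a * J c * indicator {0..} (a * u1 + b * u2 + c))"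
      unfolding u1_def u2_def x2_def by (simp add: add_divide_distrib)
    have g: "gauss_exp3 (\<lambda>a b c. hermite (Suc n) a * J c * indicator {0..} ((a * x1 + b * sqrt (C\<^sup>2 - x1\<^sup>2)) / C + c))
        = u1 ^ Suc n * K"
      unfolding feq K_def Kd_def by (rule struct[OF Jm Jb u u2])
    show "x1 ^ Suc n = (1 / q) * gauss_exp3 (\<lambda>a b c. hermite (Suc n) a * J c * indicator {0..} ((a * x1 + b * sqrt (C\<^sup>2 - x1\<^sup>2)) / C + c))"
      unfolding g q_def u1_def using Kne Cp C by (simp add: power_divide field_simps)
  qed
qed

theorem lemma10:
  fixes C :: real
  assumes "C > 0"
  shows "\<forall>i::nat. i \<ge> 1 \<longrightarrow>
    (\<exists>q::real. \<bar>q\<bar> \<ge> real (dfact (i - 1)) / (200 * real i ^ 2 * C ^ i) \<and>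
      (\<forall>x1::real. \<bar>x1\<bar> \<le> C \<longrightarrow>
        (let x2 = sqrt (C\<^sup>2 - x1\<^sup>2) in
         (if even i then
            x1 ^ i = (1 / q) * gauss_exp3 (\<lambda>a b c.
              hermite i a * indicator {0 .. 1 / (2 * real i)} (- c)
                * indicator {0..} ((a * x1 + b * x2) / C + c))
          else
            x1 ^ i = (1 / q) * gauss_exp3 (\<lambda>a b c.
              hermite i a * indicator {- (1 / (2 * real i)) .. 1 / (2 * real i)} c
                * indicator {0..} ((a * x1 + b * x2) / C + c))))))"
proof (intro allI impI)
  fix i :: nat assume i1: "i \<ge> 1"
  then obtain n where i: "i = Suc n" by (cases i) auto
  define L where "L = real (dfact n) / (200 * real (Suc n) ^ 2)"
  have Lpos: "L > 0" unfolding L_def using dfact_pos[of n] by simp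
  have beq: "real (dfact (Suc n - 1)) / (200 * real (Suc n) ^ 2 * C ^ Suc n) = L / C ^ Suc n"
    unfolding L_def by simp
  have main: "\<exists>q::real. \<bar>q\<bar> \<ge> real (dfact (Suc n - 1)) / (200 * real (Suc n) ^ 2 * C ^ Suc n) \<and>
      (\<forall>x1::real. \<bar>x1\<bar> \<le> C \<longrightarrow>
        (let x2 = sqrt (C\<^sup>2 - x1\<^sup>2) in
         (if even (Suc n) then
            x1 ^ (Suc n) = (1 / q) * gauss_exp3 (\<lambda>a b c.
              hermite (Suc n) a * indicator {0 .. 1 / (2 * real (Suc n))} (- c)
                * indicator {0..} ((a * x1 + b * x2) / C + c))
          else
            x1 ^ (Suc n) = (1 / q) * gauss_exp3 (\<lambda>a b c.
              hermite (Suc n) a * indicator {- (1 / (2 * real (Suc n))) .. 1 / (2 * real (Suc n))} c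
                * indicator {0..} ((a * x1 + b * x2) / C + c)))))"
  proof (cases "even (Suc n)")
    case True
    then obtain j where n: "n = 2 * j + 1"
      by (metis even_Suc oddE)
    have lb: "\<bar>Kd (\<lambda>c. indicator {0 .. 1 / (2 * real (Suc n))} (- c)) n\<bar> \<ge> L"
      unfolding L_def by (rule K_even[OF n])
    have Jm: "(\<lambda>c. indicator {0 .. 1 / (2 * real (Suc n))} (- c) :: real) \<in> borel_measurable borel"
      by measurable
    have Jb: "\<And>c. \<bar>indicator {0 .. 1 / (2 * real (Suc n))} (- c) :: real\<bar> \<le> 1"
      by (simp add: indicator_def)
    show ?thesis using assemble[OF \<open>C > 0\<close> Jm Jb lb Lpos] True by (simp add: L_def Let_def)
  next
    case False
    then obtain j where n: "n = 2 * j"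
      by (metis even_Suc evenE)
    have lb: "\<bar>Kd (\<lambda>c. indicator {- (1 / (2 * real (Suc n))) .. 1 / (2 * real (Suc n))} c) n\<bar> \<ge> L"
      unfolding L_def by (rule K_odd[OF n])
    have Jm: "(\<lambda>c. indicator {- (1 / (2 * real (Suc n))) .. 1 / (2 * real (Suc n))} c :: real) \<in> borel_measurable borel"
      by measurable
    have Jb: "\<And>c. \<bar>indicator {- (1 / (2 * real (Suc n))) .. 1 / (2 * real (Suc n))} c :: real\<bar> \<le> 1"
      by (simp add: indicator_def)
    show ?thesis using assemble[OF \<open>C > 0\<close> Jm Jb lb Lpos] False by (simp add: L_def Let_def)
  qed
  then show "\<exists>q::real. \<bar>q\<bar> \<ge> real (dfact (i - 1)) / (200 * real i ^ 2 * C ^ i) \<and>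
      (\<forall>x1::real. \<bar>x1\<bar> \<le> C \<longrightarrow>
        (let x2 = sqrt (C\<^sup>2 - x1\<^sup>2) in
         (if even i then
            x1 ^ i = (1 / q) * gauss_exp3 (\<lambda>a b c.
              hermite i a * indicator {0 .. 1 / (2 * real i)} (- c)
                * indicator {0..} ((a * x1 + b * x2) / C + c))
          else
            x1 ^ i = (1 / q) * gauss_exp3 (\<lambda>a b c.
              hermite i a * indicator {- (1 / (2 * real i)) .. 1 / (2 * real i)} c
                * indicator {0..} ((a * x1 + b * x2) / C + c)))))"
    by (simp only: i)
qed


end
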